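(* Let $c\in[0,1/2]$, $\mu\in[-1+c,1-c]^n$, $d\in\mathbb{N}$, $\beta>0$, and let $f:\{-1,1\}^n\to\{-1,1\}$ be computed by a decision tree of size $s$. Then $$\sum_{S\subseteq N:\ |\hat f(S,\mu)|\geq\beta \text{ and } |S|\leq d}\hat f^2(S,\mu)\;\geq\; 1-\Big(4(1-c/2)^d s+2^{d+2}\beta\Big).$$
   Context: $N=\{1,\ldots,n\}$. For $\mu\in[-1,1]^n$, $\mathcal{D}_\mu$ is the product distribution on $\{-1,1\}^n$ with independent coordinates and $\mathbb{E}_{x\sim\mathcal{D}_\mu}[x_i]=\mu_i$. Define $z_i(x,\mu)=(x_i-\mu_i)/\sqrt{1-\mu_i^2}$, $z_S(x,\mu)=\prod_{i\in S}z_i(x,\mu)$, and $\hat f(S,\mu)=\mathbb{E}_{x\sim\mathcal{D}_\mu}[f(x)z_S(x,\mu)]$. A decision tree over $\{-1,1\}^n$ is a rooted binary tree whose internal nodes are labeled by indices $i\in N$, with two outgoing edges labeled $1$ and $-1$, and leaves labeled $\pm1$, no index appearing twice on any root-to-leaf path; on input $x$ one follows at a node labeled $i$ the edge labeled $x_i$ and outputs the label of the leaf reached. Its size is its number of leaves. *)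

theory Defs
  imports "HOL-Analysis.Analysis"
begin

definition cube :: "nat \<Rightarrow> (nat \<Rightarrow> real) set" where
  "cube n = PiE {1..n} (\<lambda>_. {-1, 1})"

text \<open>Probability mass of x under the product distribution D_mu
  (independent coordinates, E[x_i] = mu_i).\<close>
definition prob_mu :: "nat \<Rightarrow> (nat \<Rightarrow> real) \<Rightarrow> (nat \<Rightarrow> real) \<Rightarrow> real" where
  "prob_mu n \<mu> x = (\<Prod>i\<in>{1..n}. (1 + x i * \<mu> i) / 2)"

definition expect_mu :: "nat \<Rightarrow> (nat \<Rightarrow> real) \<Rightarrow> ((nat \<Rightarrow> real) \<Rightarrow> real) \<Rightarrow> real" where
  "expect_mu n \<mu> g = (\<Sum>x\<in>cube n. prob_mu n \<mu> x * g x)"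

definition zi :: "nat \<Rightarrow> (nat \<Rightarrow> real) \<Rightarrow> (nat \<Rightarrow> real) \<Rightarrow> real" where
  "zi i x \<mu> = (x i - \<mu> i) / sqrt (1 - (\<mu> i)\<^sup>2)"

definition zS :: "nat set \<Rightarrow> (nat \<Rightarrow> real) \<Rightarrow> (nat \<Rightarrow> real) \<Rightarrow> real" where
  "zS S x \<mu> = (\<Prod>i\<in>S. zi i x \<mu>)"

definition fhat :: "nat \<Rightarrow> ((nat \<Rightarrow> real) \<Rightarrow> real) \<Rightarrow> nat set \<Rightarrow> (nat \<Rightarrow> real) \<Rightarrow> real" where
  "fhat n f S \<mu> = expect_mu n \<mu> (\<lambda>x. f x * zS S x \<mu>)"

datatype dtree = Leaf real | Node nat dtree dtree

fun dt_eval :: "dtree \<Rightarrow> (nat \<Rightarrow> real) \<Rightarrow> real" where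
  "dt_eval (Leaf b) x = b"
| "dt_eval (Node i t1 tm) x = (if x i = 1 then dt_eval t1 x else dt_eval tm x)"

fun dt_size :: "dtree \<Rightarrow> nat" where
  "dt_size (Leaf b) = 1"
| "dt_size (Node i t1 tm) = dt_size t1 + dt_size tm"

fun dt_wf :: "nat \<Rightarrow> nat set \<Rightarrow> dtree \<Rightarrow> bool" where
  "dt_wf n U (Leaf b) = (b \<in> {-1, 1})"
| "dt_wf n U (Node i t1 tm) = (i \<in> {1..n} \<and> i \<notin> U \<and>
      dt_wf n (insert i U) t1 \<and> dt_wf n (insert i U) tm)"

definition computed_by_dt_of_size :: "nat \<Rightarrow> ((nat \<Rightarrow> real) \<Rightarrow> real) \<Rightarrow> nat \<Rightarrow> bool" where
  "computed_by_dt_of_size n f s = (\<exists>T. dt_wf n {} T \<and> dt_size T = s \<and>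
      (\<forall>x\<in>cube n. f x = dt_eval T x))"

end

theory Submission
  imports Defs
begin

lemma cube_pm: "x \<in> cube n \<Longrightarrow> i \<in> {1..n} \<Longrightarrow> x i = 1 \<or> x i = -1"
  unfolding cube_def by (auto simp: PiE_def Pi_def)

lemma finite_cube: "finite (cube n)"
  unfolding cube_def by (intro finite_PiE) auto

lemma expect_prod:
  "expect_mu n \<mu> (\<lambda>x. \<Prod>i\<in>{1..n}. h i (x i)) =
   (\<Prod>i\<in>{1..n}. (1 + \<mu> i)/2 * h i 1 + (1 - \<mu> i)/2 * h i (-1))"
proof -
  have "expect_mu n \<mu> (\<lambda>x. \<Prod>i\<in>{1..n}. h i (x i)) =
        (\<Sum>x\<in>cube n. \<Prod>i\<in>{1..n}. (1 + x i * \<mu> i)/2 * h i (x i))"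
    unfolding expect_mu_def prob_mu_def prod.distrib by simp
  also have "\<dots> = (\<Prod>i\<in>{1..n}. \<Sum>t\<in>{-1,1::real}. (1 + t * \<mu> i)/2 * h i t)"
    unfolding cube_def by (rule prod_sum_PiE[symmetric]) auto
  also have "\<dots> = (\<Prod>i\<in>{1..n}. (1 + \<mu> i)/2 * h i 1 + (1 - \<mu> i)/2 * h i (-1))"
    by (intro prod.cong) (auto simp: algebra_simps)
  finally show ?thesis .
qed

lemma expect_add: "expect_mu n \<mu> (\<lambda>x. u x + v x) = expect_mu n \<mu> u + expect_mu n \<mu> v"
  unfolding expect_mu_def by (simp add: algebra_simps sum.distrib)

lemma expect_cmult: "expect_mu n \<mu> (\<lambda>x. c * u x) = c * expect_mu n \<mu> u"
  unfolding expect_mu_def by (simp add: algebra_simps sum_distrib_left)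

lemma expect_cong: "(\<And>x. x \<in> cube n \<Longrightarrow> u x = v x) \<Longrightarrow> expect_mu n \<mu> u = expect_mu n \<mu> v"
  unfolding expect_mu_def by (intro sum.cong) auto

lemma prob_pos:
  assumes "\<forall>i\<in>{1..n}. \<bar>\<mu> i\<bar> < 1" "x \<in> cube n"
  shows "prob_mu n \<mu> x > 0"
  unfolding prob_mu_def
proof (intro prod_pos)
  fix i assume i: "i \<in> {1..n}"
  then have "x i = 1 \<or> x i = -1" using cube_pm assms(2) by blast
  moreover have "\<bar>\<mu> i\<bar> < 1" using assms(1) i by blast
  ultimately show "(1 + x i * \<mu> i) / 2 > 0" by (auto simp: abs_less_iff)
qed

lemma expect_mono:
  assumes "\<forall>i\<in>{1..n}. \<bar>\<mu> i\<bar> < 1" "\<And>x. x \<in> cube n \<Longrightarrow> u x \<le> v x"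
  shows "expect_mu n \<mu> u \<le> expect_mu n \<mu> v"
  unfolding expect_mu_def
  using prob_pos[OF assms(1)] assms(2)
  by (intro sum_mono mult_left_mono) (auto intro: less_imp_le)

lemma expect_one: "expect_mu n \<mu> (\<lambda>x. 1) = 1"
proof -
  have "(1 + \<mu> i)/2 * 1 + (1 - \<mu> i)/2 * 1 = (1::real)" for i by (simp add: field_simps)
  then show ?thesis using expect_prod[of n \<mu> "\<lambda>i t. 1"] by simp
qed

lemma kernel:
  assumes mu: "\<forall>i\<in>{1..n}. \<bar>\<mu> i\<bar> < 1" and x: "x \<in> cube n" and y: "y \<in> cube n"
  shows "(\<Sum>S\<in>Pow {1..n}. zS S x \<mu> * zS S y \<mu>) = (if x = y then 1 / prob_mu n \<mu> x else 0)"
proof -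
  have "(\<Sum>S\<in>Pow {1..n}. zS S x \<mu> * zS S y \<mu>) =
        (\<Sum>S\<in>Pow {1..n}. (\<Prod>i\<in>S. zi i x \<mu> * zi i y \<mu>) * (\<Prod>i\<in>{1..n}-S. 1))"
    unfolding zS_def by (simp add: prod.distrib)
  also have "\<dots> = (\<Prod>i\<in>{1..n}. zi i x \<mu> * zi i y \<mu> + 1)"
    by (rule prod_add[symmetric]) auto
  finally have eq: "(\<Sum>S\<in>Pow {1..n}. zS S x \<mu> * zS S y \<mu>) = (\<Prod>i\<in>{1..n}. zi i x \<mu> * zi i y \<mu> + 1)" .
  have s: "sqrt (1 - (\<mu> i)\<^sup>2) ^ 2 = 1 - (\<mu> i)\<^sup>2" "1 - (\<mu> i)\<^sup>2 > 0" if "i \<in> {1..n}" for i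
  proof -
    have "\<bar>\<mu> i\<bar> < 1" using mu that by auto
    then have "(\<mu> i)\<^sup>2 < 1" by (simp add: abs_square_less_1)
    then show "1 - (\<mu> i)\<^sup>2 > 0" by simp
    then show "sqrt (1 - (\<mu> i)\<^sup>2) ^ 2 = 1 - (\<mu> i)\<^sup>2" by simp
  qed
  show ?thesis
  proof (cases "x = y")
    case True
    have "(\<Prod>i\<in>{1..n}. zi i x \<mu> * zi i y \<mu> + 1) = (\<Prod>i\<in>{1..n}. 1 / ((1 + x i * \<mu> i)/2))"
    proof (intro prod.cong refl)
      fix i assume i: "i \<in> {1..n}"
      have xi: "x i = 1 \<or> x i = -1" using cube_pm x i by blast
      have m: "1 - (\<mu> i)\<^sup>2 > 0" using s i by auto
      have "\<bar>\<mu> i\<bar> < 1" using mu i by blast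
      then have a: "1 + \<mu> i \<noteq> 0" "1 - \<mu> i \<noteq> 0" by (auto simp: abs_less_iff)
      have "zi i x \<mu> * zi i y \<mu> = (x i - \<mu> i)^2 / (sqrt (1 - (\<mu> i)\<^sup>2))^2"
        unfolding zi_def True by (simp add: power2_eq_square)
      also have "\<dots> = (x i - \<mu> i)^2 / (1 - (\<mu> i)\<^sup>2)" using s[OF i] by simp
      finally have zz: "zi i x \<mu> * zi i y \<mu> = (x i - \<mu> i)^2 / (1 - (\<mu> i)\<^sup>2)" .
      show "zi i x \<mu> * zi i y \<mu> + 1 = 1 / ((1 + x i * \<mu> i)/2)"
        unfolding zz using xi m a by (auto simp: field_simps power2_eq_square)
    qed
    also have "\<dots> = 1 / prob_mu n \<mu> x" unfolding prob_mu_def by (simp add: prod_dividef)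
    finally show ?thesis using eq True by simp
  next
    case False
    have "\<exists>i\<in>{1..n}. x i \<noteq> y i"
    proof (rule ccontr)
      assume "\<not> ?thesis"
      then have "\<forall>i. x i = y i" using x y unfolding cube_def by (auto simp: PiE_def extensional_def)
      then show False using False by auto
    qed
    then obtain i where i: "i \<in> {1..n}" "x i \<noteq> y i" by blast
    have "x i = 1 \<or> x i = -1" "y i = 1 \<or> y i = -1" using cube_pm x y i by blast+
    then have "(x i = 1 \<and> y i = -1) \<or> (x i = -1 \<and> y i = 1)" using i by auto
    moreover have "1 - (\<mu> i)\<^sup>2 > 0" using s i by auto
    ultimately have "zi i x \<mu> * zi i y \<mu> + 1 = 0"
      unfolding zi_def using s[OF i(1)]
      by (auto simp: field_simps power2_eq_square[symmetric] real_sqrt_mult[symmetric])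
    then have "(\<Prod>i\<in>{1..n}. zi i x \<mu> * zi i y \<mu> + 1) = 0"
      using i by (intro prod_zero) auto
    then show ?thesis using eq False by simp
  qed
qed

lemma plancherel:
  assumes mu: "\<forall>i\<in>{1..n}. \<bar>\<mu> i\<bar> < 1"
  shows "(\<Sum>S\<in>Pow {1..n}. fhat n u S \<mu> * fhat n v S \<mu>) = expect_mu n \<mu> (\<lambda>x. u x * v x)"
proof -
  define p where "p = prob_mu n \<mu>"
  have "(\<Sum>S\<in>Pow {1..n}. fhat n u S \<mu> * fhat n v S \<mu>) =
     (\<Sum>S\<in>Pow {1..n}. \<Sum>x\<in>cube n. \<Sum>y\<in>cube n. (p x * u x) * (p y * v y) * (zS S x \<mu> * zS S y \<mu>))"
    unfolding fhat_def expect_mu_def p_def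
    by (intro sum.cong refl) (simp add: sum_product mult_ac)
  also have "\<dots> = (\<Sum>x\<in>cube n. \<Sum>S\<in>Pow {1..n}. \<Sum>y\<in>cube n. (p x * u x) * (p y * v y) * (zS S x \<mu> * zS S y \<mu>))"
    by (rule sum.swap)
  also have "\<dots> = (\<Sum>x\<in>cube n. \<Sum>y\<in>cube n. \<Sum>S\<in>Pow {1..n}. (p x * u x) * (p y * v y) * (zS S x \<mu> * zS S y \<mu>))"
    by (intro sum.cong refl) (rule sum.swap)
  also have "\<dots> = (\<Sum>x\<in>cube n. \<Sum>y\<in>cube n. (if x = y then (p x * u x) * (p y * v y) * (1 / p x) else 0))"
  proof (intro sum.cong refl)
    fix x y assume x: "x \<in> cube n" and y: "y \<in> cube n"
    have "(\<Sum>S\<in>Pow {1..n}. (p x * u x) * (p y * v y) * (zS S x \<mu> * zS S y \<mu>))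
       = (p x * u x) * (p y * v y) * (\<Sum>S\<in>Pow {1..n}. zS S x \<mu> * zS S y \<mu>)"
      by (simp add: sum_distrib_left)
    also have "\<dots> = (if x = y then (p x * u x) * (p y * v y) * (1 / p x) else 0)"
      unfolding kernel[OF mu x y] p_def by simp
    finally show "(\<Sum>S\<in>Pow {1..n}. (p x * u x) * (p y * v y) * (zS S x \<mu> * zS S y \<mu>))
       = (if x = y then (p x * u x) * (p y * v y) * (1 / p x) else 0)" .
  qed
  also have "\<dots> = (\<Sum>x\<in>cube n. p x * (u x * v x))"
  proof (intro sum.cong refl)
    fix x assume x: "x \<in> cube n"
    have "p x > 0" using prob_pos[OF mu x] p_def by simp
    then show "(\<Sum>y\<in>cube n. (if x = y then (p x * u x) * (p y * v y) * (1 / p x) else 0)) = p x * (u x * v x)"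
      using x finite_cube by (simp add: sum.delta)
  qed
  finally show ?thesis unfolding expect_mu_def p_def .
qed

definition ind :: "nat set \<Rightarrow> (nat \<Rightarrow> real) \<Rightarrow> (nat \<Rightarrow> real) \<Rightarrow> real" where
  "ind D a x = (\<Prod>i\<in>D. (1 + a i * x i) / 2)"

lemma prod_restrict_sub:
  fixes A :: "nat set" and n :: nat
  shows "A \<subseteq> {1..n} \<Longrightarrow> (\<Prod>i\<in>A. g i) = (\<Prod>i\<in>{1..n}. if i \<in> A then g i else (1::real))"
  using prod.inter_restrict[of "{1..n}" g A] by (simp add: inf.absorb2)

lemma expect_ind_z:
  assumes mu: "\<forall>i\<in>{1..n}. \<bar>\<mu> i\<bar> < 1" and D: "D \<subseteq> {1..n}" and S: "S \<subseteq> {1..n}"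
    and a: "\<forall>i\<in>D. a i = 1 \<or> a i = -1"
  shows "expect_mu n \<mu> (\<lambda>x. ind D a x * zS S x \<mu>) =
    (if S \<subseteq> D then (\<Prod>i\<in>D-S. (1 + a i * \<mu> i)/2) * (\<Prod>i\<in>S. a i * sqrt (1 - (\<mu> i)\<^sup>2) / 2) else 0)"
proof -
  define h where "h i t = (if i \<in> D then (1 + a i * t)/2 else 1) *
      (if i \<in> S then (t - \<mu> i) / sqrt (1 - (\<mu> i)\<^sup>2) else 1)" for i t
  define E where "E i = (if i \<in> S - D then 0 else
      (if i \<in> D - S then (1 + a i * \<mu> i)/2 else 1) * (if i \<in> S then a i * sqrt (1 - (\<mu> i)\<^sup>2) / 2 else 1))" for i
  have "expect_mu n \<mu> (\<lambda>x. ind D a x * zS S x \<mu>) = expect_mu n \<mu> (\<lambda>x. \<Prod>i\<in>{1..n}. h i (x i))"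
  proof (rule expect_cong)
    fix x
    show "ind D a x * zS S x \<mu> = (\<Prod>i\<in>{1..n}. h i (x i))"
      unfolding ind_def zS_def zi_def h_def prod.distrib
      by (simp add: prod_restrict_sub[OF D] prod_restrict_sub[OF S])
  qed
  also have "\<dots> = (\<Prod>i\<in>{1..n}. (1 + \<mu> i)/2 * h i 1 + (1 - \<mu> i)/2 * h i (-1))"
    by (rule expect_prod)
  also have "\<dots> = (\<Prod>i\<in>{1..n}. E i)"
  proof (intro prod.cong refl)
    fix i assume i: "i \<in> {1..n}"
    have m: "\<bar>\<mu> i\<bar> < 1" using mu i by blast
    then have "(\<mu> i)\<^sup>2 < 1" by (simp add: abs_square_less_1)
    then have m2: "1 - (\<mu> i)\<^sup>2 > 0" by simp
    define \<sigma> where "\<sigma> = sqrt (1 - (\<mu> i)\<^sup>2)"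
    have sp: "\<sigma> > 0" using m2 \<sigma>_def by simp
    have ss: "\<sigma> * \<sigma> = 1 - \<mu> i * \<mu> i" using m2 \<sigma>_def by (simp add: power2_eq_square[symmetric])
    have k1: "(1 + \<mu> i) / 2 * ((1 - \<mu> i) / \<sigma>) + (1 - \<mu> i) / 2 * ((-1 - \<mu> i) / \<sigma>) = 0"
      using sp by (simp add: field_simps)
    have k2: "(1 + \<mu> i) / 2 * ((1 - \<mu> i) / \<sigma>) = \<sigma> / 2"
      using sp ss by (simp add: field_simps)
    have k3: "(1 - \<mu> i) / 2 * ((-1 - \<mu> i) / \<sigma>) = - (\<sigma> / 2)"
      using sp ss by (simp add: field_simps)
    have hd: "h i t = (if i \<in> D then (1 + a i * t)/2 else 1) *
      (if i \<in> S then (t - \<mu> i) / \<sigma> else 1)" for t unfolding h_def \<sigma>_def by simp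
    have ed: "E i = (if i \<in> S - D then 0 else
      (if i \<in> D - S then (1 + a i * \<mu> i)/2 else 1) * (if i \<in> S then a i * \<sigma> / 2 else 1))"
      unfolding E_def \<sigma>_def by simp
    consider "i \<in> D" "a i = 1" | "i \<in> D" "a i = -1" | "i \<notin> D" using a by blast
    then show "(1 + \<mu> i)/2 * h i 1 + (1 - \<mu> i)/2 * h i (-1) = E i"
    proof cases
      case 1
      then show ?thesis unfolding hd ed using k2 by (cases "i \<in> S") auto
    next
      case 2
      then show ?thesis unfolding hd ed using k3 by (cases "i \<in> S") (auto simp: field_simps)
    next
      case 3
      then show ?thesis unfolding hd ed using k1 by (cases "i \<in> S") (auto simp: field_simps)
    qed
  qed
  also have "\<dots> = (if S \<subseteq> D then (\<Prod>i\<in>D-S. (1 + a i * \<mu> i)/2) * (\<Prod>i\<in>S. a i * sqrt (1 - (\<mu> i)\<^sup>2) / 2) else 0)"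
  proof (cases "S \<subseteq> D")
    case True
    then have "E i = (if i \<in> D - S then (1 + a i * \<mu> i)/2 else 1) * (if i \<in> S then a i * sqrt (1 - (\<mu> i)\<^sup>2) / 2 else 1)" for i
      unfolding E_def by auto
    then have "(\<Prod>i\<in>{1..n}. E i) = (\<Prod>i\<in>{1..n}. if i \<in> D - S then (1 + a i * \<mu> i)/2 else 1) * (\<Prod>i\<in>{1..n}. if i \<in> S then a i * sqrt (1 - (\<mu> i)\<^sup>2) / 2 else 1)"
      by (simp only: prod.distrib)
    also have "\<dots> = (\<Prod>i\<in>D-S. (1 + a i * \<mu> i)/2) * (\<Prod>i\<in>S. a i * sqrt (1 - (\<mu> i)\<^sup>2) / 2)"
    proof -
      have "D - S \<subseteq> {1..n}" using D by blast
      then show ?thesis using prod_restrict_sub[OF S, symmetric] prod_restrict_sub[of "D-S" n, symmetric] by simp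
    qed
    finally have "(\<Prod>i\<in>{1..n}. E i) = (\<Prod>i\<in>D-S. (1 + a i * \<mu> i)/2) * (\<Prod>i\<in>S. a i * sqrt (1 - (\<mu> i)\<^sup>2) / 2)" .
    then show ?thesis using True by simp
  next
    case False
    then obtain i where i: "i \<in> S" "i \<notin> D" by blast
    then have "E i = 0" unfolding E_def by simp
    then have "(\<Prod>i\<in>{1..n}. E i) = 0" using i S by (intro prod_zero) auto
    then show ?thesis using False by simp
  qed
  finally show ?thesis .
qed

fun paths :: "dtree \<Rightarrow> (nat set \<times> (nat \<Rightarrow> real) \<times> real) list" where
  "paths (Leaf b) = [({}, \<lambda>_. 0, b)]"
| "paths (Node i t1 t2) = map (\<lambda>(D,a,b). (insert i D, a(i:=1), b)) (paths t1) @
                          map (\<lambda>(D,a,b). (insert i D, a(i:=-1), b)) (paths t2)"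

lemma length_paths: "length (paths T) = dt_size T"
  by (induction T) auto

lemma dt_size_pos: "dt_size T \<ge> 1"
  by (induction T) auto

lemma paths_wf:
  "dt_wf n U T \<Longrightarrow> (D,a,b) \<in> set (paths T) \<Longrightarrow>
    D \<subseteq> {1..n} \<and> D \<inter> U = {} \<and> (\<forall>i\<in>D. a i = 1 \<or> a i = -1) \<and> (b = 1 \<or> b = -1)"
proof (induction T arbitrary: U D a b)
  case (Leaf x)
  then show ?case by auto
next
  case (Node i t1 t2)
  from Node.prems(2) consider
    (l) D' a' where "(D',a',b) \<in> set (paths t1)" "D = insert i D'" "a = a'(i:=1)"
  | (r) D' a' where "(D',a',b) \<in> set (paths t2)" "D = insert i D'" "a = a'(i:=-1)"
    by auto
  then show ?case
  proof cases
    case l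
    have "dt_wf n (insert i U) t1" using Node.prems(1) by simp
    from Node.IH(1)[OF this l(1)] show ?thesis using l Node.prems(1) by auto
  next
    case r
    have "dt_wf n (insert i U) t2" using Node.prems(1) by simp
    from Node.IH(2)[OF this r(1)] show ?thesis using r Node.prems(1) by auto
  qed
qed

lemma ind_insert:
  assumes "finite D" "i \<notin> D"
  shows "ind (insert i D) (a(i:=t)) x = (1 + t * x i)/2 * ind D a x"
proof -
  have "(\<Prod>j\<in>D. (1 + (a(i:=t)) j * x j) / 2) = (\<Prod>j\<in>D. (1 + a j * x j) / 2)"
    using assms by (intro prod.cong) auto
  then show ?thesis unfolding ind_def using assms by simp
qed

lemma ind_nonneg:
  assumes "\<forall>i\<in>D. a i = 1 \<or> a i = -1" "\<forall>i\<in>D. x i = 1 \<or> x i = -1"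
  shows "ind D a x \<ge> 0"
  unfolding ind_def
proof (intro prod_nonneg)
  fix i assume "i \<in> D"
  then have "a i = 1 \<or> a i = -1" "x i = 1 \<or> x i = -1" using assms by blast+
  then show "(1 + a i * x i)/2 \<ge> 0" by auto
qed

lemma sum_list_cmult: "sum_list (map (\<lambda>p. c * f p) xs) = (c::real) * sum_list (map f xs)"
  by (induction xs) (auto simp: algebra_simps)

lemma paths_sum:
  assumes "dt_wf n U T" "\<forall>i\<in>{1..n}. x i = 1 \<or> x i = -1"
  shows "sum_list (map (\<lambda>(D,a,b). w b * ind D a x) (paths T)) = w (dt_eval T x)"
  using assms(1)
proof (induction T arbitrary: U)
  case (Leaf b)
  then show ?case by (simp add: ind_def)
next
  case (Node i t1 t2)
  have wf1: "dt_wf n (insert i U) t1" and wf2: "dt_wf n (insert i U) t2" and i: "i \<in> {1..n}"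
    using Node.prems by auto
  have e1: "map (\<lambda>(D,a,b). w b * ind D a x) (map (\<lambda>(D,a,b). (insert i D, a(i:=1), b)) (paths t1))
     = map (\<lambda>p. (1 + x i)/2 * (case p of (D,a,b) \<Rightarrow> w b * ind D a x)) (paths t1)"
  unfolding map_map proof (rule map_cong[OF refl])
    fix p assume p: "p \<in> set (paths t1)"
    obtain D a b where pe: "p = (D,a,b)" by (cases p) auto
    have "D \<subseteq> {1..n}" "i \<notin> D" using paths_wf[OF wf1 p[unfolded pe]] by auto
    then have "finite D" using finite_subset by blast
    then show "((\<lambda>(D,a,b). w b * ind D a x) \<circ> (\<lambda>(D,a,b). (insert i D, a(i:=1), b))) p =
         (1 + x i) / 2 * (case p of (D, a, b) \<Rightarrow> w b * ind D a x)"
      using \<open>i \<notin> D\<close> by (simp add: pe ind_insert)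
  qed
  have e2: "map (\<lambda>(D,a,b). w b * ind D a x) (map (\<lambda>(D,a,b). (insert i D, a(i:=-1), b)) (paths t2))
     = map (\<lambda>p. (1 - x i)/2 * (case p of (D,a,b) \<Rightarrow> w b * ind D a x)) (paths t2)"
  unfolding map_map proof (rule map_cong[OF refl])
    fix p assume p: "p \<in> set (paths t2)"
    obtain D a b where pe: "p = (D,a,b)" by (cases p) auto
    have "D \<subseteq> {1..n}" "i \<notin> D" using paths_wf[OF wf2 p[unfolded pe]] by auto
    then have "finite D" using finite_subset by blast
    then show "((\<lambda>(D,a,b). w b * ind D a x) \<circ> (\<lambda>(D,a,b). (insert i D, a(i:=-1), b))) p =
         (1 - x i) / 2 * (case p of (D, a, b) \<Rightarrow> w b * ind D a x)"
      using \<open>i \<notin> D\<close> by (simp add: pe ind_insert)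
  qed
  have "sum_list (map (\<lambda>(D,a,b). w b * ind D a x) (paths (Node i t1 t2))) =
     (1 + x i)/2 * w (dt_eval t1 x) + (1 - x i)/2 * w (dt_eval t2 x)"
    unfolding paths.simps map_append sum_list_append e1 e2 sum_list_cmult
    using Node.IH(1)[OF wf1] Node.IH(2)[OF wf2] by simp
  also have "\<dots> = w (dt_eval (Node i t1 t2) x)"
    using assms(2) i by auto
  finally show ?case .
qed

lemma prod_upd_notin: "i \<notin> D \<Longrightarrow> (\<Prod>j\<in>D. q j ((a(i:=t)) j)) = (\<Prod>j\<in>D. q j (a j))"
  by (intro prod.cong) auto

lemma prod_if_notin: "i \<notin> D \<Longrightarrow> (\<Prod>j\<in>D. q j (if j = i then t else a j)) = (\<Prod>j\<in>D. q j (a j))"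
  by (intro prod.cong) auto

lemma branch_sum:
  fixes q :: "nat \<Rightarrow> real \<Rightarrow> real" and t :: real
  assumes "\<forall>p\<in>set L. finite (fst p) \<and> i \<notin> fst p"
  shows "sum_list (map (\<lambda>(D,a,b). \<Prod>j\<in>D. q j (a j)) (filter (\<lambda>(D,a,b). card D \<le> Suc k)
            (map (\<lambda>(D,a,b). (insert i D, a(i:=t), b)) L)))
       = q i t * sum_list (map (\<lambda>(D,a,b). \<Prod>j\<in>D. q j (a j)) (filter (\<lambda>(D,a,b). card D \<le> k) L))"
  using assms
  by (induction L) (auto simp: prod_if_notin algebra_simps)

lemma paths_L1:
  assumes "dt_wf n U T" "\<forall>i\<in>{1..n}. q i 1 \<ge> 0 \<and> q i (-1) \<ge> 0 \<and> q i 1 + q i (-1) \<le> (2::real)"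
  shows "sum_list (map (\<lambda>(D,a,b). \<Prod>i\<in>D. q i (a i)) (filter (\<lambda>(D,a,b). card D \<le> k) (paths T))) \<le> 2^k"
  using assms(1)
proof (induction T arbitrary: U k)
  case (Leaf b)
  then show ?case by simp
next
  case (Node i t1 t2)
  have wf1: "dt_wf n (insert i U) t1" and wf2: "dt_wf n (insert i U) t2" and i: "i \<in> {1..n}"
    using Node.prems by auto
  have P1: "\<forall>p\<in>set (paths t1). finite (fst p) \<and> i \<notin> fst p"
  proof
    fix p assume p: "p \<in> set (paths t1)"
    obtain D a b where pe: "p = (D,a,b)" by (cases p) auto
    have "D \<subseteq> {1..n}" "i \<notin> D" using paths_wf[OF wf1 p[unfolded pe]] by auto
    then show "finite (fst p) \<and> i \<notin> fst p" using pe finite_subset by auto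
  qed
  have P2: "\<forall>p\<in>set (paths t2). finite (fst p) \<and> i \<notin> fst p"
  proof
    fix p assume p: "p \<in> set (paths t2)"
    obtain D a b where pe: "p = (D,a,b)" by (cases p) auto
    have "D \<subseteq> {1..n}" "i \<notin> D" using paths_wf[OF wf2 p[unfolded pe]] by auto
    then show "finite (fst p) \<and> i \<notin> fst p" using pe finite_subset by auto
  qed
  show ?case
  proof (cases k)
    case 0
    have "filter (\<lambda>(D,a,b). card D \<le> k) (paths (Node i t1 t2)) = []"
      (is "?fl = []") unfolding filter_empty_conv using P1 P2 0 by fastforce
    show ?thesis unfolding \<open>?fl = []\<close> by simp
  next
    case (Suc k')
    have q: "q i 1 \<ge> 0" "q i (-1) \<ge> 0" "q i 1 + q i (-1) \<le> 2" using assms(2) i by auto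
    have "sum_list (map (\<lambda>(D,a,b). \<Prod>i\<in>D. q i (a i)) (filter (\<lambda>(D,a,b). card D \<le> k) (paths (Node i t1 t2))))
      = q i 1 * sum_list (map (\<lambda>(D,a,b). \<Prod>i\<in>D. q i (a i)) (filter (\<lambda>(D,a,b). card D \<le> k') (paths t1)))
      + q i (-1) * sum_list (map (\<lambda>(D,a,b). \<Prod>i\<in>D. q i (a i)) (filter (\<lambda>(D,a,b). card D \<le> k') (paths t2)))"
      unfolding Suc paths.simps filter_append map_append sum_list_append
      using branch_sum[OF P1, of q k' 1] branch_sum[OF P2, of q k' "-1"] by simp
    also have "\<dots> \<le> q i 1 * 2^k' + q i (-1) * 2^k'"
    proof -
      have h1: "sum_list (map (\<lambda>(D,a,b). \<Prod>i\<in>D. q i (a i)) (filter (\<lambda>(D,a,b). card D \<le> k') (paths t1))) \<le> 2^k'"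
        by (rule Node.IH(1)[OF wf1])
      have h2: "sum_list (map (\<lambda>(D,a,b). \<Prod>i\<in>D. q i (a i)) (filter (\<lambda>(D,a,b). card D \<le> k') (paths t2))) \<le> 2^k'"
        by (rule Node.IH(2)[OF wf2])
      show ?thesis by (rule add_mono; rule mult_left_mono) (use h1 h2 q in auto)
    qed
    also have "\<dots> \<le> 2^k" using q unfolding Suc
      by (simp add: distrib_right[symmetric])
    finally show ?thesis .
  qed
qed

lemma sum_list_bound:
  assumes "\<forall>p\<in>set xs. f p \<le> (B::real)"
  shows "sum_list (map f xs) \<le> real (length xs) * B"
  using assms by (induction xs) (auto simp: algebra_simps)

lemma sum_list_split:
  "sum_list (map f (filter P xs)) + sum_list (map f (filter (\<lambda>x. \<not> P x) xs)) = (sum_list (map f xs) :: real)"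
  by (induction xs) auto

lemma expect_sum_list:
  "expect_mu n \<mu> (\<lambda>x. sum_list (map (\<lambda>p. F p x) xs)) = sum_list (map (\<lambda>p. expect_mu n \<mu> (F p)) xs)"
proof (induction xs)
  case Nil
  then show ?case by (simp add: expect_mu_def)
next
  case (Cons a xs)
  then show ?case using expect_add[of n \<mu> "F a" "\<lambda>x. sum_list (map (\<lambda>p. F p x) xs)"] by simp
qed

lemma sum_sum_list:
  "(\<Sum>S\<in>A. sum_list (map (\<lambda>p. F p S) xs)) = sum_list (map (\<lambda>p. \<Sum>S\<in>A. F p S) xs)"
  by (induction xs) (auto simp: sum.distrib)

lemma abs_sum_list: "\<bar>sum_list (map f xs)\<bar> \<le> sum_list (map (\<lambda>p. \<bar>f p\<bar>) xs)" for f :: "_ \<Rightarrow> real"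
  by (induction xs) (auto intro: order_trans[OF abs_triangle_ineq])

lemma final_alg:
  fixes F B :: "nat set set" and fh gh rh :: "nat set \<Rightarrow> real"
  assumes "finite F" "B \<subseteq> F" "\<forall>S\<in>F. fh S = gh S + rh S" "(\<Sum>S\<in>F. (fh S)\<^sup>2) = 1"
    "(\<Sum>S\<in>F. (rh S)\<^sup>2) \<le> \<delta>" "(\<Sum>S\<in>F. \<bar>gh S\<bar>) \<le> G"
    "\<forall>S\<in>F-B. fh S * gh S \<le> \<beta> * \<bar>gh S\<bar>" "\<beta> \<ge> 0"
  shows "(\<Sum>S\<in>B. (fh S)\<^sup>2) \<ge> 1 - (\<delta> + 2 * \<beta> * G)"
proof -
  have pw: "(fh S)\<^sup>2 / 2 \<le> \<beta> * \<bar>gh S\<bar> + (rh S)\<^sup>2 / 2" if "S \<in> F - B" for S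
  proof -
    have "(fh S)\<^sup>2 = fh S * gh S + fh S * rh S" using assms(3) that by (simp add: power2_eq_square algebra_simps)
    moreover have "2 * fh S * rh S \<le> (fh S)\<^sup>2 + (rh S)\<^sup>2"
      by (rule sum_squares_bound)
    moreover have "fh S * gh S \<le> \<beta> * \<bar>gh S\<bar>" using assms(7) that by blast
    ultimately show ?thesis by linarith
  qed
  have fin: "finite (F - B)" using assms(1) by simp
  have "(\<Sum>S\<in>F-B. (fh S)\<^sup>2 / 2) \<le> (\<Sum>S\<in>F-B. \<beta> * \<bar>gh S\<bar> + (rh S)\<^sup>2 / 2)"
    using pw by (intro sum_mono) auto
  also have "\<dots> = \<beta> * (\<Sum>S\<in>F-B. \<bar>gh S\<bar>) + (\<Sum>S\<in>F-B. (rh S)\<^sup>2) / 2"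
    by (simp add: sum.distrib sum_distrib_left sum_divide_distrib)
  also have "\<dots> \<le> \<beta> * (\<Sum>S\<in>F. \<bar>gh S\<bar>) + (\<Sum>S\<in>F. (rh S)\<^sup>2) / 2"
    using assms(1,8) by (intro add_mono mult_left_mono divide_right_mono sum_mono2) auto
  also have "\<dots> \<le> \<beta> * G + \<delta> / 2"
    using assms(5,6,8) by (intro add_mono mult_left_mono divide_right_mono) auto
  finally have X: "(\<Sum>S\<in>F-B. (fh S)\<^sup>2) \<le> 2 * \<beta> * G + \<delta>"
    by (simp add: sum_divide_distrib[symmetric])
  have "(\<Sum>S\<in>F. (fh S)\<^sup>2) = (\<Sum>S\<in>B. (fh S)\<^sup>2) + (\<Sum>S\<in>F-B. (fh S)\<^sup>2)"
    using assms(1,2) by (metis add.commute sum.subset_diff)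
  then show ?thesis using X assms(4) by linarith
qed

lemma fhat_sum_list:
  "fhat n (\<lambda>x. sum_list (map (\<lambda>(D,a,b). b * ind D a x) xs)) S \<mu> =
   sum_list (map (\<lambda>(D,a,b). b * expect_mu n \<mu> (\<lambda>x. ind D a x * zS S x \<mu>)) xs)"
proof (induction xs)
  case Nil
  then show ?case by (simp add: fhat_def expect_mu_def)
next
  case (Cons p xs)
  obtain D a b where pe: "p = (D,a,b)" by (cases p) auto
  have "fhat n (\<lambda>x. sum_list (map (\<lambda>(D,a,b). b * ind D a x) (p # xs))) S \<mu> =
     expect_mu n \<mu> (\<lambda>x. b * (ind D a x * zS S x \<mu>) + sum_list (map (\<lambda>(D,a,b). b * ind D a x) xs) * zS S x \<mu>)"
    unfolding fhat_def pe by (simp add: algebra_simps)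
  also have "\<dots> = b * expect_mu n \<mu> (\<lambda>x. ind D a x * zS S x \<mu>) + fhat n (\<lambda>x. sum_list (map (\<lambda>(D,a,b). b * ind D a x) xs)) S \<mu>"
    unfolding expect_add expect_cmult fhat_def ..
  finally show ?case using Cons pe by simp
qed

lemma expect_sum_list_ind:
  "expect_mu n \<mu> (\<lambda>x. sum_list (map (\<lambda>(D,a,b). ind D a x) xs)) =
   sum_list (map (\<lambda>(D,a,b). expect_mu n \<mu> (ind D a)) xs)"
proof (induction xs)
  case Nil
  then show ?case by (simp add: expect_mu_def)
next
  case (Cons p xs)
  obtain D a b where pe: "p = (D,a,b)" by (cases p) auto
  show ?case using Cons unfolding pe
    using expect_add[of n \<mu> "ind D a" "\<lambda>x. sum_list (map (\<lambda>(D,a,b). ind D a x) xs)"] by simp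
qed

lemma sum_abs_coeff:
  assumes mu: "\<forall>i\<in>{1..n}. \<bar>\<mu> i\<bar> < 1" and D: "D \<subseteq> {1..n}" and a: "\<forall>i\<in>D. a i = 1 \<or> a i = -1"
  shows "(\<Sum>S\<in>Pow {1..n}. \<bar>expect_mu n \<mu> (\<lambda>x. ind D a x * zS S x \<mu>)\<bar>) =
         (\<Prod>i\<in>D. sqrt (1 - (\<mu> i)\<^sup>2) / 2 + (1 + a i * \<mu> i) / 2)"
proof -
  have fD: "finite D" using D finite_subset by blast
  have pos: "(1 + a i * \<mu> i) / 2 \<ge> 0" if "i \<in> D" for i
  proof -
    have "\<bar>\<mu> i\<bar> < 1" using mu D that by blast
    moreover have "a i = 1 \<or> a i = -1" using a that by blast
    ultimately show ?thesis by (auto simp: abs_less_iff)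
  qed
  have "(\<Sum>S\<in>Pow {1..n}. \<bar>expect_mu n \<mu> (\<lambda>x. ind D a x * zS S x \<mu>)\<bar>) =
      (\<Sum>S\<in>Pow {1..n}. if S \<in> Pow D then (\<Prod>i\<in>S. sqrt (1 - (\<mu> i)\<^sup>2) / 2) * (\<Prod>i\<in>D-S. (1 + a i * \<mu> i) / 2) else 0)"
  proof (intro sum.cong refl)
    fix S assume S: "S \<in> Pow {1..n}"
    then have Ss: "S \<subseteq> {1..n}" by simp
    show "\<bar>expect_mu n \<mu> (\<lambda>x. ind D a x * zS S x \<mu>)\<bar> =
      (if S \<in> Pow D then (\<Prod>i\<in>S. sqrt (1 - (\<mu> i)\<^sup>2) / 2) * (\<Prod>i\<in>D-S. (1 + a i * \<mu> i) / 2) else 0)"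
    proof (cases "S \<subseteq> D")
      case True
      have e1: "\<bar>\<Prod>i\<in>D-S. (1 + a i * \<mu> i) / 2\<bar> = (\<Prod>i\<in>D-S. (1 + a i * \<mu> i) / 2)"
        using pos by (intro abs_of_nonneg prod_nonneg) auto
      have e2: "\<bar>\<Prod>i\<in>S. a i * sqrt (1 - (\<mu> i)\<^sup>2) / 2\<bar> = (\<Prod>i\<in>S. sqrt (1 - (\<mu> i)\<^sup>2) / 2)"
        unfolding abs_prod
      proof (intro prod.cong refl)
        fix i assume "i \<in> S"
        then have "a i = 1 \<or> a i = -1" using a True by blast
        moreover have "\<bar>\<mu> i\<bar> < 1" using mu S \<open>i \<in> S\<close> by blast
        then have "(\<mu> i)\<^sup>2 < 1" by (simp add: abs_square_less_1)
        ultimately show "\<bar>a i * sqrt (1 - (\<mu> i)\<^sup>2) / 2\<bar> = sqrt (1 - (\<mu> i)\<^sup>2) / 2" by auto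
      qed
      show ?thesis unfolding expect_ind_z[OF mu D Ss a] using S True e1 e2
        by (auto simp: abs_mult)
    next
      case False
      then show ?thesis unfolding expect_ind_z[OF mu D Ss a] using S by auto
    qed
  qed
  also have "\<dots> = (\<Sum>S\<in>Pow D. (\<Prod>i\<in>S. sqrt (1 - (\<mu> i)\<^sup>2) / 2) * (\<Prod>i\<in>D-S. (1 + a i * \<mu> i) / 2))"
  proof -
    have PP: "Pow {1..n} \<inter> Pow D = Pow D" using D by auto
    show ?thesis
      using sum.inter_restrict[of "Pow {1..n}" "\<lambda>S. (\<Prod>i\<in>S. sqrt (1 - (\<mu> i)\<^sup>2) / 2) * (\<Prod>i\<in>D-S. (1 + a i * \<mu> i) / 2)" "Pow D"]
      unfolding PP by simp
  qed
  also have "\<dots> = (\<Prod>i\<in>D. sqrt (1 - (\<mu> i)\<^sup>2) / 2 + (1 + a i * \<mu> i) / 2)"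
    by (rule prod_add[OF fD, symmetric])
  finally show ?thesis .
qed

lemma qc_help: "0 \<le> t \<Longrightarrow> t \<le> 1 \<Longrightarrow> -1 < m \<Longrightarrow> m < 1 \<Longrightarrow>
  t / 2 + (1 + 1 * m) / 2 \<ge> 0 \<and> t / 2 + (1 + (-1) * m) / 2 \<ge> 0 \<and>
  (t / 2 + (1 + 1 * m) / 2) + (t / 2 + (1 + (-1) * m) / 2) \<le> (2::real)"
  by (simp add: field_simps)

theorem lemma4:
  fixes n d s :: nat and c \<beta> :: real and \<mu> :: "nat \<Rightarrow> real"
    and f :: "(nat \<Rightarrow> real) \<Rightarrow> real"
  assumes "0 \<le> c" and "c \<le> 1/2"
    and "\<forall>i\<in>{1..n}. -1 + c \<le> \<mu> i \<and> \<mu> i \<le> 1 - c"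
    and "\<beta> > 0"
    and "\<forall>x\<in>cube n. f x \<in> {-1, 1}"
    and "computed_by_dt_of_size n f s"
  shows "(\<Sum>S\<in>{S. S \<subseteq> {1..n} \<and> \<bar>fhat n f S \<mu>\<bar> \<ge> \<beta> \<and> card S \<le> d}.
            (fhat n f S \<mu>)\<^sup>2)
         \<ge> 1 - (4 * (1 - c/2) ^ d * real s + 2 ^ (d + 2) * \<beta>)"
proof -
  obtain T where T: "dt_wf n {} T" "dt_size T = s" "\<forall>x\<in>cube n. f x = dt_eval T x"
    using assms(6) unfolding computed_by_dt_of_size_def by blast
  define B where "B = {S. S \<subseteq> {1..n} \<and> \<bar>fhat n f S \<mu>\<bar> \<ge> \<beta> \<and> card S \<le> d}"
  have s1: "real s \<ge> 1" using dt_size_pos[of T] T(2) by simp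
  show ?thesis
  proof (cases "c = 0")
    case True
    have "(\<Sum>S\<in>B. (fhat n f S \<mu>)\<^sup>2) \<ge> 0" by (intro sum_nonneg) auto
    moreover have "(2::real) ^ (d + 2) * \<beta> \<ge> 0" using assms(4) by simp
    moreover have "4 * (1 - c/2) ^ d * real s = 4 * real s" using True by simp
    ultimately show ?thesis using s1 unfolding B_def by linarith
  next
    case False
    then have c0: "c > 0" using assms(1) by simp
    have mu: "\<forall>i\<in>{1..n}. \<bar>\<mu> i\<bar> < 1"
    proof
      fix i assume "i \<in> {1..n}"
      then have "-1 + c \<le> \<mu> i \<and> \<mu> i \<le> 1 - c" using assms(3) by blast
      then show "\<bar>\<mu> i\<bar> < 1" using c0 by auto
    qed
    define L where "L = paths T"
    have PW: "D \<subseteq> {1..n} \<and> (\<forall>i\<in>D. a i = 1 \<or> a i = -1) \<and> (b = 1 \<or> b = -1)"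
      if "(D,a,b) \<in> set L" for D a b
      using paths_wf[OF T(1), of D a b] that unfolding L_def by auto
    define P :: "nat set \<times> (nat \<Rightarrow> real) \<times> real \<Rightarrow> bool" where "P = (\<lambda>(D,a,b). card D \<le> d)"
    define g where "g x = sum_list (map (\<lambda>(D,a,b). b * ind D a x) (filter P L))" for x
    define r where "r x = sum_list (map (\<lambda>(D,a,b). b * ind D a x) (filter (\<lambda>p. \<not> P p) L))" for x
    define q where "q x = sum_list (map (\<lambda>(D,a,b). ind D a x) (filter (\<lambda>p. \<not> P p) L))" for x
    define \<delta> where "\<delta> = real s * (1 - c/2) ^ d"
    have cx: "\<forall>i\<in>{1..n}. x i = 1 \<or> x i = -1" if "x \<in> cube n" for x
      using cube_pm that by blast
    have fgr: "f x = g x + r x" if x: "x \<in> cube n" for x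
    proof -
      have "f x = sum_list (map (\<lambda>(D,a,b). b * ind D a x) L)"
        using paths_sum[OF T(1) cx[OF x], of "\<lambda>b. b"] T(3) x unfolding L_def by simp
      then show ?thesis unfolding g_def r_def using sum_list_split by metis
    qed
    have hat: "fhat n f S \<mu> = fhat n g S \<mu> + fhat n r S \<mu>" for S
    proof -
      have "fhat n f S \<mu> = expect_mu n \<mu> (\<lambda>x. g x * zS S x \<mu> + r x * zS S x \<mu>)"
        unfolding fhat_def by (rule expect_cong) (simp add: fgr algebra_simps)
      then show ?thesis unfolding fhat_def expect_add .
    qed
    have ghat: "fhat n g S \<mu> = sum_list (map (\<lambda>(D,a,b). b * expect_mu n \<mu> (\<lambda>x. ind D a x * zS S x \<mu>)) (filter P L))" for S
      unfolding g_def by (rule fhat_sum_list)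
    have ghat0: "fhat n g S \<mu> = 0" if S: "S \<subseteq> {1..n}" "\<not> card S \<le> d" for S
    proof -
      have "sum_list (map (\<lambda>(D,a,b). b * expect_mu n \<mu> (\<lambda>x. ind D a x * zS S x \<mu>)) (filter P L))
          = sum_list (map (\<lambda>p. 0) (filter P L))"
      proof (intro arg_cong[where f=sum_list] map_cong refl)
        fix p assume p: "p \<in> set (filter P L)"
        obtain D a b where pe: "p = (D,a,b)" by (cases p) auto
        have pw: "D \<subseteq> {1..n}" "\<forall>i\<in>D. a i = 1 \<or> a i = -1" "card D \<le> d"
          using PW[of D a b] p pe unfolding P_def by auto
        have "\<not> S \<subseteq> D"
        proof
          assume "S \<subseteq> D"
          then have "card S \<le> card D" using pw(1) by (intro card_mono) (auto intro: finite_subset)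
          then show False using pw(3) S(2) by simp
        qed
        then show "(case p of (D,a,b) \<Rightarrow> b * expect_mu n \<mu> (\<lambda>x. ind D a x * zS S x \<mu>)) = 0"
          unfolding pe using expect_ind_z[OF mu pw(1) S(1) pw(2)] by simp
      qed
      then show ?thesis unfolding ghat by simp
    qed
    have gL1: "(\<Sum>S\<in>Pow {1..n}. \<bar>fhat n g S \<mu>\<bar>) \<le> 2 ^ d"
    proof -
      have "(\<Sum>S\<in>Pow {1..n}. \<bar>fhat n g S \<mu>\<bar>) \<le>
          (\<Sum>S\<in>Pow {1..n}. sum_list (map (\<lambda>p. \<bar>case p of (D,a,b) \<Rightarrow> expect_mu n \<mu> (\<lambda>x. ind D a x * zS S x \<mu>)\<bar>) (filter P L)))"
      proof (intro sum_mono)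
        fix S
        have "\<bar>fhat n g S \<mu>\<bar> \<le> sum_list (map (\<lambda>p. \<bar>case p of (D,a,b) \<Rightarrow> b * expect_mu n \<mu> (\<lambda>x. ind D a x * zS S x \<mu>)\<bar>) (filter P L))"
          unfolding ghat by (rule abs_sum_list)
        also have "\<dots> = sum_list (map (\<lambda>p. \<bar>case p of (D,a,b) \<Rightarrow> expect_mu n \<mu> (\<lambda>x. ind D a x * zS S x \<mu>)\<bar>) (filter P L))"
        proof (intro arg_cong[where f=sum_list] map_cong refl)
          fix p assume p: "p \<in> set (filter P L)"
          obtain D a b where pe: "p = (D,a,b)" by (cases p) auto
          have "b = 1 \<or> b = -1" using PW[of D a b] p pe by auto
          then show "\<bar>case p of (D,a,b) \<Rightarrow> b * expect_mu n \<mu> (\<lambda>x. ind D a x * zS S x \<mu>)\<bar> =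
              \<bar>case p of (D,a,b) \<Rightarrow> expect_mu n \<mu> (\<lambda>x. ind D a x * zS S x \<mu>)\<bar>"
            unfolding pe by (auto simp: abs_mult)
        qed
        finally show "\<bar>fhat n g S \<mu>\<bar> \<le> sum_list (map (\<lambda>p. \<bar>case p of (D,a,b) \<Rightarrow> expect_mu n \<mu> (\<lambda>x. ind D a x * zS S x \<mu>)\<bar>) (filter P L))" .
      qed
      also have "\<dots> = sum_list (map (\<lambda>p. \<Sum>S\<in>Pow {1..n}. \<bar>case p of (D,a,b) \<Rightarrow> expect_mu n \<mu> (\<lambda>x. ind D a x * zS S x \<mu>)\<bar>) (filter P L))"
        by (rule sum_sum_list)
      also have "\<dots> = sum_list (map (\<lambda>(D,a,b). \<Prod>i\<in>D. sqrt (1 - (\<mu> i)\<^sup>2) / 2 + (1 + a i * \<mu> i) / 2) (filter P L))"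
      proof (intro arg_cong[where f=sum_list] map_cong refl)
        fix p assume p: "p \<in> set (filter P L)"
        obtain D a b where pe: "p = (D,a,b)" by (cases p) auto
        have pw: "D \<subseteq> {1..n}" "\<forall>i\<in>D. a i = 1 \<or> a i = -1"
          using PW[of D a b] p pe by auto
        show "(\<Sum>S\<in>Pow {1..n}. \<bar>case p of (D,a,b) \<Rightarrow> expect_mu n \<mu> (\<lambda>x. ind D a x * zS S x \<mu>)\<bar>) =
            (case p of (D,a,b) \<Rightarrow> \<Prod>i\<in>D. sqrt (1 - (\<mu> i)\<^sup>2) / 2 + (1 + a i * \<mu> i) / 2)"
          unfolding pe using sum_abs_coeff[OF mu pw] by simp
      qed
      also have "\<dots> \<le> 2 ^ d"
      proof -
        have qc: "\<forall>i\<in>{1..n}. sqrt (1 - (\<mu> i)\<^sup>2) / 2 + (1 + 1 * \<mu> i) / 2 \<ge> 0 \<and>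
            sqrt (1 - (\<mu> i)\<^sup>2) / 2 + (1 + (-1) * \<mu> i) / 2 \<ge> 0 \<and>
            (sqrt (1 - (\<mu> i)\<^sup>2) / 2 + (1 + 1 * \<mu> i) / 2) + (sqrt (1 - (\<mu> i)\<^sup>2) / 2 + (1 + (-1) * \<mu> i) / 2) \<le> (2::real)"
        proof
          fix i assume i: "i \<in> {1..n}"
          have m: "\<bar>\<mu> i\<bar> < 1" using mu i by blast
          then have "(\<mu> i)\<^sup>2 < 1" by (simp add: abs_square_less_1)
          then have sq: "sqrt (1 - (\<mu> i)\<^sup>2) \<le> 1" "sqrt (1 - (\<mu> i)\<^sup>2) \<ge> 0" by auto
          have mm: "-1 < \<mu> i" "\<mu> i < 1" using m by (auto simp: abs_less_iff)
          show "sqrt (1 - (\<mu> i)\<^sup>2) / 2 + (1 + 1 * \<mu> i) / 2 \<ge> 0 \<and>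
            sqrt (1 - (\<mu> i)\<^sup>2) / 2 + (1 + (-1) * \<mu> i) / 2 \<ge> 0 \<and>
            (sqrt (1 - (\<mu> i)\<^sup>2) / 2 + (1 + 1 * \<mu> i) / 2) + (sqrt (1 - (\<mu> i)\<^sup>2) / 2 + (1 + (-1) * \<mu> i) / 2) \<le> (2::real)"
            by (rule qc_help[OF sq(2) sq(1) mm])
        qed
        show ?thesis
          using paths_L1[OF T(1), of "\<lambda>i t. sqrt (1 - (\<mu> i)\<^sup>2) / 2 + (1 + t * \<mu> i) / 2" d, OF qc]
          unfolding L_def P_def by simp
      qed
      finally show ?thesis .
    qed
    have ind0: "ind D a x \<ge> 0" if "(D,a,b) \<in> set L" "x \<in> cube n" for D a b x
      using ind_nonneg[of D a x] PW[OF that(1)] cx[OF that(2)] by blast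
    have rq: "r x * r x \<le> q x" if x: "x \<in> cube n" for x
    proof -
      have "\<bar>r x\<bar> \<le> sum_list (map (\<lambda>p. \<bar>case p of (D,a,b) \<Rightarrow> b * ind D a x\<bar>) (filter (\<lambda>p. \<not> P p) L))"
        unfolding r_def by (rule abs_sum_list)
      also have "\<dots> = q x" unfolding q_def
      proof (intro arg_cong[where f=sum_list] map_cong refl)
        fix p assume p: "p \<in> set (filter (\<lambda>p. \<not> P p) L)"
        obtain D a b where pe: "p = (D,a,b)" by (cases p) auto
        have "b = 1 \<or> b = -1" using PW[of D a b] p pe by auto
        moreover have "ind D a x \<ge> 0" using ind0[of D a b x] p pe x by auto
        ultimately show "\<bar>case p of (D,a,b) \<Rightarrow> b * ind D a x\<bar> = (case p of (D,a,b) \<Rightarrow> ind D a x)"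
          unfolding pe by auto
      qed
      finally have ra: "\<bar>r x\<bar> \<le> q x" .
      have q0: "q x \<ge> 0" unfolding q_def
        using ind0 x by (intro sum_list_nonneg) auto
      have tot: "sum_list (map (\<lambda>(D,a,b). ind D a x) L) = 1"
        using paths_sum[OF T(1) cx[OF x], of "\<lambda>b. 1"] unfolding L_def by simp
      have q1: "q x \<le> 1"
      proof -
        have "sum_list (map (\<lambda>(D,a,b). ind D a x) (filter P L)) \<ge> 0"
          using ind0 x by (intro sum_list_nonneg) auto
        then show ?thesis using tot sum_list_split[of "\<lambda>(D,a,b). ind D a x" P L] unfolding q_def by linarith
      qed
      have "r x * r x = \<bar>r x\<bar> * \<bar>r x\<bar>" by (simp add: abs_mult[symmetric])
      also have "\<dots> \<le> q x * q x" using ra by (intro mult_mono) auto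
      also have "\<dots> \<le> q x * 1" using q0 q1 by (intro mult_left_mono) auto
      finally show ?thesis by simp
    qed
    have Eq: "expect_mu n \<mu> q \<le> \<delta>"
    proof -
      have "expect_mu n \<mu> q = sum_list (map (\<lambda>(D,a,b). expect_mu n \<mu> (ind D a)) (filter (\<lambda>p. \<not> P p) L))"
        unfolding q_def by (rule expect_sum_list_ind)
      also have "\<dots> \<le> real (length (filter (\<lambda>p. \<not> P p) L)) * (1 - c/2) ^ d"
      proof (rule sum_list_bound, intro ballI)
        fix p assume p: "p \<in> set (filter (\<lambda>p. \<not> P p) L)"
        obtain D a b where pe: "p = (D,a,b)" by (cases p) auto
        have pw: "D \<subseteq> {1..n}" "\<forall>i\<in>D. a i = 1 \<or> a i = -1" "\<not> card D \<le> d"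
          using PW[of D a b] p pe unfolding P_def by auto
        have "expect_mu n \<mu> (ind D a) = expect_mu n \<mu> (\<lambda>x. ind D a x * zS {} x \<mu>)"
          unfolding zS_def by simp
        also have "\<dots> = (\<Prod>i\<in>D. (1 + a i * \<mu> i) / 2)"
          using expect_ind_z[OF mu pw(1) _ pw(2), of "{}"] by simp
        also have "\<dots> \<le> (\<Prod>i\<in>D. 1 - c/2)"
        proof (intro prod_mono conjI)
          fix i assume i: "i \<in> D"
          then have "-1 + c \<le> \<mu> i \<and> \<mu> i \<le> 1 - c" using assms(3) pw(1) by blast
          moreover have "a i = 1 \<or> a i = -1" using pw(2) i by blast
          ultimately show "0 \<le> (1 + a i * \<mu> i) / 2" "(1 + a i * \<mu> i) / 2 \<le> 1 - c/2"
            using assms(1,2) by auto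
        qed
        also have "\<dots> = (1 - c/2) ^ card D" by simp
        also have "\<dots> \<le> (1 - c/2) ^ d"
          using pw(3) assms(2) c0 by (intro power_decreasing) auto
        finally show "(case p of (D,a,b) \<Rightarrow> expect_mu n \<mu> (ind D a)) \<le> (1 - c/2) ^ d"
          unfolding pe by simp
      qed
      also have "\<dots> \<le> real s * (1 - c/2) ^ d"
      proof (intro mult_right_mono)
        have "length (filter (\<lambda>p. \<not> P p) L) \<le> length L" by simp
        then show "real (length (filter (\<lambda>p. \<not> P p) L)) \<le> real s"
          using length_paths[of T] T(2) unfolding L_def by simp
        show "0 \<le> (1 - c/2) ^ d" using assms(2) by simp
      qed
      finally show ?thesis unfolding \<delta>_def .
    qed
    have Rr: "(\<Sum>S\<in>Pow {1..n}. (fhat n r S \<mu>)\<^sup>2) \<le> \<delta>"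
    proof -
      have "(\<Sum>S\<in>Pow {1..n}. (fhat n r S \<mu>)\<^sup>2) = expect_mu n \<mu> (\<lambda>x. r x * r x)"
        using plancherel[OF mu, of r r] by (simp add: power2_eq_square)
      also have "\<dots> \<le> expect_mu n \<mu> q" by (rule expect_mono[OF mu rq])
      finally show ?thesis using Eq by simp
    qed
    have Pf: "(\<Sum>S\<in>Pow {1..n}. (fhat n f S \<mu>)\<^sup>2) = 1"
    proof -
      have "(\<Sum>S\<in>Pow {1..n}. (fhat n f S \<mu>)\<^sup>2) = expect_mu n \<mu> (\<lambda>x. f x * f x)"
        using plancherel[OF mu, of f f] by (simp add: power2_eq_square)
      also have "\<dots> = expect_mu n \<mu> (\<lambda>x. 1)"
        using assms(5) by (intro expect_cong) auto
      finally show ?thesis using expect_one by simp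
    qed
    have main: "(\<Sum>S\<in>B. (fhat n f S \<mu>)\<^sup>2) \<ge> 1 - (\<delta> + 2 * \<beta> * 2 ^ d)"
    proof (rule final_alg[where gh = "\<lambda>S. fhat n g S \<mu>" and rh = "\<lambda>S. fhat n r S \<mu>"])
      show "finite (Pow {1..n})" by simp
      show "B \<subseteq> Pow {1..n}" unfolding B_def by auto
      show "\<forall>S\<in>Pow {1..n}. fhat n f S \<mu> = fhat n g S \<mu> + fhat n r S \<mu>" using hat by simp
      show "(\<Sum>S\<in>Pow {1..n}. (fhat n f S \<mu>)\<^sup>2) = 1" by (rule Pf)
      show "(\<Sum>S\<in>Pow {1..n}. (fhat n r S \<mu>)\<^sup>2) \<le> \<delta>" by (rule Rr)
      show "(\<Sum>S\<in>Pow {1..n}. \<bar>fhat n g S \<mu>\<bar>) \<le> 2 ^ d" by (rule gL1)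
      show "\<beta> \<ge> 0" using assms(4) by simp
      show "\<forall>S\<in>Pow {1..n} - B. fhat n f S \<mu> * fhat n g S \<mu> \<le> \<beta> * \<bar>fhat n g S \<mu>\<bar>"
      proof
        fix S assume S: "S \<in> Pow {1..n} - B"
        show "fhat n f S \<mu> * fhat n g S \<mu> \<le> \<beta> * \<bar>fhat n g S \<mu>\<bar>"
        proof (cases "card S \<le> d")
          case True
          then have "\<bar>fhat n f S \<mu>\<bar> < \<beta>" using S unfolding B_def by auto
          then have "\<bar>fhat n f S \<mu>\<bar> * \<bar>fhat n g S \<mu>\<bar> \<le> \<beta> * \<bar>fhat n g S \<mu>\<bar>"
            by (intro mult_right_mono) auto
          moreover have "fhat n f S \<mu> * fhat n g S \<mu> \<le> \<bar>fhat n f S \<mu>\<bar> * \<bar>fhat n g S \<mu>\<bar>"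
            by (simp add: abs_mult[symmetric])
          ultimately show ?thesis by linarith
        next
          case False
          then show ?thesis using ghat0[of S] S by simp
        qed
      qed
    qed
    have "\<delta> + 2 * \<beta> * 2 ^ d \<le> 4 * (1 - c/2) ^ d * real s + 2 ^ (d + 2) * \<beta>"
    proof -
      have "\<delta> \<le> 4 * (1 - c/2) ^ d * real s" unfolding \<delta>_def using assms(2) by simp
      moreover have "2 * \<beta> * 2 ^ d \<le> 2 ^ (d + 2) * \<beta>" using assms(4) by (simp add: power_add)
      ultimately show ?thesis by linarith
    qed
    then show ?thesis using main unfolding B_def by linarith
  qed
qed

end
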